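(* Let $(L,\vee,\wedge,\to,\gets,f,g,0,1)$ be an HBGC-algebra. Then there exists a GC-frame $\mathcal{F}=(X,\leq,R)$ such that $(L,\vee,\wedge,\to,\gets,f,g,0,1)$ is isomorphic to a subalgebra of the complex algebra $\mathbb{HB}_{\rm GC}(\mathcal{F})=(\mathcal{T}_\leq,\cup,\cap,\to,\gets,{}^\blacktriangle,{}^\blacktriangledown,\emptyset,X)$.
   Context: A Heyting–Brouwer algebra $(L,\vee,\wedge,\to,\gets,0,1)$ is a bounded lattice in which for all $a,b$ the relative pseudocomplement $a\to b$ (greatest $x$ with $a\wedge x\leq b$) and the co-implication $a\gets b$ (least $x$ with $b\leq a\vee x$) exist. An HBGC-algebra is a Heyting–Brouwer algebra with maps $f,g\colon L\to L$ forming an order-preserving Galois connection ($f(a)\leq b\iff a\leq g(b)$). A GC-frame $(X,\leq,R)$ is a set $X$ with a quasiorder $\leq$ and a relation $R\subseteq X\times X$ such that $x\leq x'$, $x\,R\,y$, $y'\leq y$ imply $x'\,R\,y'$. $\mathcal{T}_\leq$ is the set of upward $\leq$-closed subsets of $X$. For $A\subseteq X$: $A^\blacktriangle=\{x\mid x\,R\,y\text{ for some }y\in A\}$, $A^\blacktriangledown=\{x\mid y\,R\,x\text{ implies }y\in A\}$. On $\mathcal{T}_\leq$: $A\to B=\{a\in X\mid \forall b\geq a\,(b\in A\Rightarrow b\in B)\}$, $A\gets B=\{a\in X\mid \exists b\leq a\,(b\notin A\text{ and }b\in B)\}$. Isomorphisms preserve $\vee,\wedge,\to,\gets,f,g,0,1$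 with $f\leftrightarrow{}^\blacktriangle$, $g\leftrightarrow{}^\blacktriangledown$. *)

theory Defs
  imports Main
begin

definition HBGC_algebra ::
  "('a::bounded_lattice \<Rightarrow> 'a \<Rightarrow> 'a) \<Rightarrow> ('a \<Rightarrow> 'a \<Rightarrow> 'a) \<Rightarrow> ('a \<Rightarrow> 'a) \<Rightarrow> ('a \<Rightarrow> 'a) \<Rightarrow> bool"
where
  "HBGC_algebra imp coimp f g \<longleftrightarrow>
     (\<forall>a b. inf a (imp a b) \<le> b \<and> (\<forall>x. inf a x \<le> b \<longrightarrow> x \<le> imp a b)) \<and>
     (\<forall>a b. b \<le> sup a (coimp a b) \<and> (\<forall>x. b \<le> sup a x \<longrightarrow> coimp a b \<le> x)) \<and>
     (\<forall>a b. f a \<le> b \<longleftrightarrow> a \<le> g b)"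

definition GC_frame :: "'b set \<Rightarrow> ('b \<Rightarrow> 'b \<Rightarrow> bool) \<Rightarrow> ('b \<Rightarrow> 'b \<Rightarrow> bool) \<Rightarrow> bool" where
  "GC_frame X le R \<longleftrightarrow>
     (\<forall>x\<in>X. le x x) \<and>
     (\<forall>x\<in>X. \<forall>y\<in>X. \<forall>z\<in>X. le x y \<longrightarrow> le y z \<longrightarrow> le x z) \<and>
     (\<forall>x y. R x y \<longrightarrow> x \<in> X \<and> y \<in> X) \<and>
     (\<forall>x y. le x y \<longrightarrow> x \<in> X \<and> y \<in> X) \<and>
     (\<forall>x x' y y'. le x x' \<longrightarrow> R x y \<longrightarrow> le y' y \<longrightarrow> R x' y')"

definition upsets :: "'b set \<Rightarrow> ('b \<Rightarrow> 'b \<Rightarrow> bool) \<Rightarrow> 'b set set" where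
  "upsets X le = {A. A \<subseteq> X \<and> (\<forall>x\<in>A. \<forall>y\<in>X. le x y \<longrightarrow> y \<in> A)}"

definition frame_imp :: "'b set \<Rightarrow> ('b \<Rightarrow> 'b \<Rightarrow> bool) \<Rightarrow> 'b set \<Rightarrow> 'b set \<Rightarrow> 'b set" where
  "frame_imp X le A B = {a\<in>X. \<forall>b\<in>X. le a b \<longrightarrow> b \<in> A \<longrightarrow> b \<in> B}"

definition frame_coimp :: "'b set \<Rightarrow> ('b \<Rightarrow> 'b \<Rightarrow> bool) \<Rightarrow> 'b set \<Rightarrow> 'b set \<Rightarrow> 'b set" where
  "frame_coimp X le A B = {a\<in>X. \<exists>b\<in>X. le b a \<and> b \<notin> A \<and> b \<in> B}"

definition blackup :: "'b set \<Rightarrow> ('b \<Rightarrow> 'b \<Rightarrow> bool) \<Rightarrow> 'b set \<Rightarrow> 'b set" where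
  "blackup X R A = {x\<in>X. \<exists>y\<in>A. R x y}"

definition blackdown :: "'b set \<Rightarrow> ('b \<Rightarrow> 'b \<Rightarrow> bool) \<Rightarrow> 'b set \<Rightarrow> 'b set" where
  "blackdown X R A = {x\<in>X. \<forall>y\<in>X. R y x \<longrightarrow> y \<in> A}"

text \<open>An embedding of the HBGC-algebra into the complex algebra of the frame, i.e. an
  isomorphism onto a subalgebra (its image).\<close>

definition HBGC_embedding ::
  "('a::bounded_lattice \<Rightarrow> 'a \<Rightarrow> 'a) \<Rightarrow> ('a \<Rightarrow> 'a \<Rightarrow> 'a) \<Rightarrow> ('a \<Rightarrow> 'a) \<Rightarrow> ('a \<Rightarrow> 'a) \<Rightarrow>
   'b set \<Rightarrow> ('b \<Rightarrow> 'b \<Rightarrow> bool) \<Rightarrow> ('b \<Rightarrow> 'b \<Rightarrow> bool) \<Rightarrow> ('a \<Rightarrow> 'b set) \<Rightarrow> bool"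
where
  "HBGC_embedding imp coimp f g X le R h \<longleftrightarrow>
     inj h \<and>
     (\<forall>a. h a \<in> upsets X le) \<and>
     (\<forall>a b. h (sup a b) = h a \<union> h b) \<and>
     (\<forall>a b. h (inf a b) = h a \<inter> h b) \<and>
     (\<forall>a b. h (imp a b) = frame_imp X le (h a) (h b)) \<and>
     (\<forall>a b. h (coimp a b) = frame_coimp X le (h a) (h b)) \<and>
     (\<forall>a. h (f a) = blackup X R (h a)) \<and>
     (\<forall>a. h (g a) = blackdown X R (h a)) \<and>
     h bot = {} \<and> h top = X"

end

theory Submission
  imports Defs
begin

definition filt :: "'a::bounded_lattice set \<Rightarrow> bool" where
  "filt F \<longleftrightarrow> top \<in> F \<and> (\<forall>a\<in>F. \<forall>b\<in>F. inf a b \<in> F) \<and> (\<forall>a b. a \<in> F \<longrightarrow> a \<le> b \<longrightarrow> b \<in> F)"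

definition idl :: "'a::bounded_lattice set \<Rightarrow> bool" where
  "idl I \<longleftrightarrow> bot \<in> I \<and> (\<forall>a\<in>I. \<forall>b\<in>I. sup a b \<in> I) \<and> (\<forall>a b. a \<in> I \<longrightarrow> b \<le> a \<longrightarrow> b \<in> I)"

definition pfilt :: "'a::bounded_lattice set \<Rightarrow> bool" where
  "pfilt P \<longleftrightarrow> filt P \<and> bot \<notin> P \<and> (\<forall>a b. sup a b \<in> P \<longrightarrow> a \<in> P \<or> b \<in> P)"

lemma gen_filt:
  assumes "filt F"
  shows "filt {c. \<exists>m\<in>F. inf m a \<le> c}"
  unfolding filt_def
proof (intro conjI ballI allI impI)
  show "top \<in> {c. \<exists>m\<in>F. inf m a \<le> c}" using assms unfolding filt_def by auto
next
  fix x y assume "x \<in> {c. \<exists>m\<in>F. inf m a \<le> c}" "y \<in> {c. \<exists>m\<in>F. inf m a \<le> c}"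
  then obtain m n where mn: "m \<in> F" "inf m a \<le> x" "n \<in> F" "inf n a \<le> y" by blast
  have "inf m n \<in> F" using assms mn unfolding filt_def by blast
  moreover have "inf (inf m n) a \<le> x" using mn(2) by (rule order_trans[rotated]) (simp add: le_infI1 inf_mono)
  moreover have "inf (inf m n) a \<le> y" using mn(4) by (rule order_trans[rotated]) (simp add: le_infI1 inf_mono)
  ultimately show "inf x y \<in> {c. \<exists>m\<in>F. inf m a \<le> c}" by auto
next
  fix x y assume "x \<in> {c. \<exists>m\<in>F. inf m a \<le> c}" "x \<le> y"
  then obtain m where "m \<in> F" "inf m a \<le> x" by blast
  moreover have "inf m a \<le> y" using calculation(2) \<open>x \<le> y\<close> by (rule order_trans)
  ultimately show "y \<in> {c. \<exists>m\<in>F. inf m a \<le> c}" by blast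
qed

lemma prime_ext:
  fixes F I :: "'a::bounded_lattice set"
  assumes D: "\<And>a b c::'a. inf a (sup b c) \<le> sup (inf a b) (inf a c)"
    and F: "filt F" and I: "idl I" and disj: "F \<inter> I = {}"
  shows "\<exists>P. pfilt P \<and> F \<subseteq> P \<and> P \<inter> I = {}"
proof -
  let ?A = "{G. filt G \<and> F \<subseteq> G \<and> G \<inter> I = {}}"
  have "\<exists>M\<in>?A. \<forall>X\<in>?A. M \<subseteq> X \<longrightarrow> X = M"
  proof (rule subset_Zorn_nonempty)
    show "?A \<noteq> {}" using F disj by blast
  next
    fix C assume ne: "C \<noteq> {}" and ch: "subset.chain ?A C"
    have CA: "C \<subseteq> ?A" and cmp: "\<And>X Y. X \<in> C \<Longrightarrow> Y \<in> C \<Longrightarrow> X \<subseteq> Y \<or> Y \<subseteq> X"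
      using ch unfolding subset_chain_def by blast+
    have "filt (\<Union>C)"
      unfolding filt_def
    proof (intro conjI ballI allI impI)
      show "top \<in> \<Union>C" using ne CA by (auto simp: filt_def)
    next
      fix a b assume "a \<in> \<Union>C" "b \<in> \<Union>C"
      then obtain X Y where X: "X \<in> C" "a \<in> X" and Y: "Y \<in> C" "b \<in> Y" by blast
      show "inf a b \<in> \<Union>C"
      proof (cases "X \<subseteq> Y")
        case True
        have "filt Y" using CA Y by auto
        then have "inf a b \<in> Y" using True X Y unfolding filt_def by blast
        then show ?thesis using Y by blast
      next
        case False
        then have "Y \<subseteq> X" using cmp X Y by blast
        have "filt X" using CA X by auto
        then have "inf a b \<in> X" using \<open>Y \<subseteq> X\<close> X Y unfolding filt_def by blast
        then show ?thesis using X by blast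
      qed
    next
      fix a b assume "a \<in> \<Union>C" "a \<le> b"
      then obtain X where X: "X \<in> C" "a \<in> X" "a \<le> b" by blast
      have "filt X" using CA X by auto
      then have "b \<in> X" using X unfolding filt_def by blast
      then show "b \<in> \<Union>C" using X by blast
    qed
    then show "\<Union>C \<in> ?A" using ne CA by auto
  qed
  then obtain M where MA: "M \<in> ?A" and mx: "\<forall>X\<in>?A. M \<subseteq> X \<longrightarrow> X = M" by (rule bexE)
  have M: "filt M" "F \<subseteq> M" "M \<inter> I = {}" using MA by auto
  have max: "\<And>X. filt X \<Longrightarrow> F \<subseteq> X \<Longrightarrow> X \<inter> I = {} \<Longrightarrow> M \<subseteq> X \<Longrightarrow> X = M" using mx by auto
  have ext: "\<exists>m\<in>M. \<exists>i\<in>I. inf m a \<le> i" if "a \<notin> M" for a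
  proof (rule ccontr)
    assume nn: "\<not> ?thesis"
    let ?X = "{c. \<exists>m\<in>M. inf m a \<le> c}"
    have "filt ?X" using gen_filt[OF M(1)] .
    moreover have "M \<subseteq> ?X" by auto (meson inf_le1)
    moreover have "?X \<inter> I = {}" using nn I unfolding idl_def by blast
    moreover have "a \<in> ?X" proof -
      have "top \<in> M" using M(1) unfolding filt_def by blast
      then show ?thesis by (auto intro!: bexI[of _ top])
    qed
    ultimately show False using max[of ?X] M(2) that by blast
  qed
  have "pfilt M"
    unfolding pfilt_def
  proof (intro conjI allI impI)
    show "filt M" by fact
    show "bot \<notin> M" using M(3) I unfolding idl_def by blast
  next
    fix a b assume ab: "sup a b \<in> M"
    show "a \<in> M \<or> b \<in> M"
    proof (rule ccontr)
      assume "\<not> ?thesis"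
      then obtain m1 i1 m2 i2 where h: "m1 \<in> M" "i1 \<in> I" "inf m1 a \<le> i1" "m2 \<in> M" "i2 \<in> I" "inf m2 b \<le> i2"
        using ext by meson
      have d: "inf (inf m1 m2) (sup a b) \<le> sup (inf (inf m1 m2) a) (inf (inf m1 m2) b)" by (rule D)
      have e1: "inf (inf m1 m2) a \<le> i1" using h(3) by (rule order_trans[rotated]) (simp add: inf_mono le_infI1)
      have e2: "inf (inf m1 m2) b \<le> i2" using h(6) by (rule order_trans[rotated]) (simp add: inf_mono le_infI1 le_infI2)
      have le: "inf (inf m1 m2) (sup a b) \<le> sup i1 i2"
        using d sup_mono[OF e1 e2] by (rule order_trans)
      have fm: "\<And>x y. x \<in> M \<Longrightarrow> y \<in> M \<Longrightarrow> inf x y \<in> M" using M(1) unfolding filt_def by blast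
      have "inf (inf m1 m2) (sup a b) \<in> M" by (intro fm h(1) h(4) ab)
      moreover have "sup i1 i2 \<in> I" using I h(2) h(5) unfolding idl_def by blast
      moreover have "inf (inf m1 m2) (sup a b) \<in> I" using le I calculation(2) unfolding idl_def by blast
      ultimately show False using M(3) by blast
    qed
  qed
  then show ?thesis using M by blast
qed


lemma pf_up: "pfilt P \<Longrightarrow> a \<in> P \<Longrightarrow> a \<le> b \<Longrightarrow> b \<in> P"
  unfolding pfilt_def filt_def by blast
lemma pf_inf: "pfilt P \<Longrightarrow> inf a b \<in> P \<longleftrightarrow> a \<in> P \<and> b \<in> P"
  unfolding pfilt_def filt_def by (meson inf_le1 inf_le2)
lemma pf_sup: "pfilt P \<Longrightarrow> sup a b \<in> P \<longleftrightarrow> a \<in> P \<or> b \<in> P"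
  unfolding pfilt_def filt_def by (meson sup_ge1 sup_ge2)
lemma pf_top: "pfilt P \<Longrightarrow> top \<in> P"
  unfolding pfilt_def filt_def by blast
lemma pf_bot: "pfilt P \<Longrightarrow> bot \<notin> P"
  unfolding pfilt_def by blast

lemma filt_up: "filt {c. a \<le> c}"
  unfolding filt_def by auto
lemma idl_down: "idl {c. c \<le> b}"
  unfolding idl_def by auto

locale hb =
  fixes imp coimp :: "'a::bounded_lattice \<Rightarrow> 'a \<Rightarrow> 'a" and f g :: "'a \<Rightarrow> 'a"
  assumes H: "HBGC_algebra imp coimp f g"
begin

lemma imp1: "inf a (imp a b) \<le> b" using H unfolding HBGC_algebra_def by blast
lemma imp2: "inf a x \<le> b \<Longrightarrow> x \<le> imp a b" using H unfolding HBGC_algebra_def by blast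
lemma co1: "b \<le> sup a (coimp a b)" using H unfolding HBGC_algebra_def by blast
lemma co2: "b \<le> sup a x \<Longrightarrow> coimp a b \<le> x" using H unfolding HBGC_algebra_def by blast
lemma gc: "f a \<le> b \<longleftrightarrow> a \<le> g b" using H unfolding HBGC_algebra_def by blast

lemma D: fixes a b c :: 'a shows "inf a (sup b c) \<le> sup (inf a b) (inf a c)"
proof -
  let ?r = "sup (inf a b) (inf a c)"
  have "b \<le> imp a ?r" by (rule imp2) simp
  moreover have "c \<le> imp a ?r" by (rule imp2) simp
  ultimately have "sup b c \<le> imp a ?r" by simp
  then have "inf a (sup b c) \<le> inf a (imp a ?r)" by (rule inf_mono[OF order_refl])
  also have "\<dots> \<le> ?r" by (rule imp1)
  finally show ?thesis .
qed

lemma f_mono: "a \<le> b \<Longrightarrow> f a \<le> f b"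
  by (meson gc order_refl order_trans)
lemma f_sup: "f (sup a b) \<le> sup (f a) (f b)"
  by (metis gc le_sup_iff sup_ge1 sup_ge2)
lemma f_bot: "f bot = bot"
  using gc[of bot bot] by (simp add: bot_unique)
lemma fg: "f (g a) \<le> a"
  by (simp add: gc)

lemma ext: fixes F I :: "'a set" shows "filt F \<Longrightarrow> idl I \<Longrightarrow> F \<inter> I = {} \<Longrightarrow> \<exists>P. pfilt P \<and> F \<subseteq> P \<and> P \<inter> I = {}"
  by (rule prime_ext[OF D])

lemma sep: fixes a b :: 'a shows "\<not> a \<le> b \<Longrightarrow> \<exists>P. pfilt P \<and> a \<in> P \<and> b \<notin> P"
proof -
  assume nab: "\<not> a \<le> b"
  have "{c. a \<le> c} \<inter> {c. c \<le> b} = {}" using nab order_trans by blast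
  then obtain P where "pfilt P" "{c. a \<le> c} \<subseteq> P" "P \<inter> {c. c \<le> b} = {}"
    using ext[OF filt_up idl_down] by blast
  then show ?thesis by auto
qed

definition XX :: "'a set set" where "XX = {P. pfilt P}"
definition LE :: "'a set \<Rightarrow> 'a set \<Rightarrow> bool" where "LE = (\<lambda>x y. x \<in> XX \<and> y \<in> XX \<and> x \<subseteq> y)"
definition RR :: "'a set \<Rightarrow> 'a set \<Rightarrow> bool" where "RR = (\<lambda>x y. x \<in> XX \<and> y \<in> XX \<and> (\<forall>b\<in>y. f b \<in> x))"
definition hh :: "'a \<Rightarrow> 'a set set" where "hh = (\<lambda>a. {P \<in> XX. a \<in> P})"

lemma frame: "GC_frame XX LE RR"
  unfolding GC_frame_def LE_def RR_def by blast

lemma h_imp: "hh (imp a b) = frame_imp XX LE (hh a) (hh b)"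
proof (rule set_eqI, rule iffI)
  fix x assume "x \<in> hh (imp a b)"
  then have x: "pfilt x" "imp a b \<in> x" unfolding hh_def XX_def by auto
  have "b \<in> y" if py: "pfilt y" "x \<subseteq> y" "a \<in> y" for y
  proof -
    have "inf a (imp a b) \<in> y" using pf_inf[OF py(1)] py x by blast
    then show "b \<in> y" using pf_up[OF py(1) _ imp1] by blast
  qed
  then show "x \<in> frame_imp XX LE (hh a) (hh b)"
    unfolding frame_imp_def LE_def hh_def XX_def using x by auto
next
  fix x assume xin: "x \<in> frame_imp XX LE (hh a) (hh b)"
  then have px: "pfilt x" and hyp: "\<And>y. pfilt y \<Longrightarrow> x \<subseteq> y \<Longrightarrow> a \<in> y \<Longrightarrow> b \<in> y"
    unfolding frame_imp_def LE_def hh_def XX_def by auto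
  show "x \<in> hh (imp a b)"
  proof (rule ccontr)
    assume "x \<notin> hh (imp a b)"
    then have ni: "imp a b \<notin> x" using px unfolding hh_def XX_def by auto
    let ?F = "{c. \<exists>m\<in>x. inf m a \<le> c}"
    have fF: "filt ?F" using gen_filt px unfolding pfilt_def by blast
    have "?F \<inter> {c. c \<le> b} = {}"
    proof (rule ccontr)
      assume "?F \<inter> {c. c \<le> b} \<noteq> {}"
      then obtain m c where "m \<in> x" "inf m a \<le> c" "c \<le> b" by blast
      then have "inf a m \<le> b" by (metis inf_commute order_trans)
      then have "m \<le> imp a b" by (rule imp2)
      then show False using pf_up[OF px \<open>m \<in> x\<close>] ni by blast
    qed
    then obtain P where P: "pfilt P" "?F \<subseteq> P" "P \<inter> {c. c \<le> b} = {}"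
      using ext[OF fF idl_down] by blast
    have "x \<subseteq> P"
    proof
      fix m assume "m \<in> x"
      then have "m \<in> ?F" using inf_le1 by blast
      then show "m \<in> P" using P(2) by blast
    qed
    moreover have "a \<in> P" using P(2) pf_top[OF px] by auto
    moreover have "b \<notin> P" using P(3) by auto
    ultimately show False using hyp P(1) by blast
  qed
qed

lemma h_coimp: "hh (coimp a b) = frame_coimp XX LE (hh a) (hh b)"
proof (rule set_eqI, rule iffI)
  fix x assume "x \<in> hh (coimp a b)"
  then have px: "pfilt x" and ci: "coimp a b \<in> x" unfolding hh_def XX_def by auto
  let ?I = "{c. \<exists>d. d \<notin> x \<and> c \<le> sup d a}"
  have iI: "idl ?I" unfolding idl_def
  proof (intro conjI ballI allI impI)
    show "bot \<in> ?I" using pf_bot[OF px] by auto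
  next
    fix c1 c2 assume "c1 \<in> ?I" "c2 \<in> ?I"
    then obtain d1 d2 where d: "d1 \<notin> x" "c1 \<le> sup d1 a" "d2 \<notin> x" "c2 \<le> sup d2 a" by blast
    have "sup d1 d2 \<notin> x" using d pf_sup[OF px] by blast
    moreover have "sup c1 c2 \<le> sup (sup d1 d2) a"
    proof -
      have e1: "sup d1 a \<le> sup (sup d1 d2) a" by (rule sup_mono) simp_all
      have e2: "sup d2 a \<le> sup (sup d1 d2) a" by (rule sup_mono) simp_all
      show ?thesis using order_trans[OF d(2) e1] order_trans[OF d(4) e2] by (rule le_supI)
    qed
    ultimately show "sup c1 c2 \<in> ?I" by blast
  next
    fix c c' assume "c \<in> ?I" "c' \<le> c"
    then show "c' \<in> ?I" using order_trans by blast
  qed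
  have "{c. b \<le> c} \<inter> ?I = {}"
  proof (rule ccontr)
    assume "{c. b \<le> c} \<inter> ?I \<noteq> {}"
    then obtain c d where "b \<le> c" "d \<notin> x" "c \<le> sup d a" by blast
    then have "b \<le> sup a d" by (metis order_trans sup_commute)
    then have "coimp a b \<le> d" by (rule co2)
    then show False using pf_up[OF px ci] \<open>d \<notin> x\<close> by blast
  qed
  then obtain P where P: "pfilt P" "{c. b \<le> c} \<subseteq> P" "P \<inter> ?I = {}"
    using ext[OF filt_up iI] by blast
  have "b \<in> P" using P(2) by auto
  moreover have "a \<notin> P"
  proof
    assume "a \<in> P"
    moreover have "a \<in> ?I" using pf_bot[OF px] by (intro CollectI exI[of _ bot]) simp
    ultimately show False using P(3) by blast
  qed
  moreover have "P \<subseteq> x"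
  proof
    fix c assume "c \<in> P"
    show "c \<in> x"
    proof (rule ccontr)
      assume "c \<notin> x"
      then have "c \<in> ?I" by auto
      then show False using P(3) \<open>c \<in> P\<close> by blast
    qed
  qed
  ultimately show "x \<in> frame_coimp XX LE (hh a) (hh b)"
    unfolding frame_coimp_def LE_def hh_def XX_def using px P(1) by blast
next
  fix x assume "x \<in> frame_coimp XX LE (hh a) (hh b)"
  then obtain y where px: "pfilt x" and py: "pfilt y" and yx: "y \<subseteq> x" and ay: "a \<notin> y" and by': "b \<in> y"
    unfolding frame_coimp_def LE_def hh_def XX_def by auto
  have "sup a (coimp a b) \<in> y" using pf_up[OF py by' co1] .
  then have "coimp a b \<in> y" using ay pf_sup[OF py] by blast
  then show "x \<in> hh (coimp a b)" using yx px unfolding hh_def XX_def by auto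
qed

lemma h_f: "hh (f a) = blackup XX RR (hh a)"
proof (rule set_eqI, rule iffI)
  fix x assume "x \<in> hh (f a)"
  then have px: "pfilt x" and fa: "f a \<in> x" unfolding hh_def XX_def by auto
  let ?I = "{c. f c \<notin> x}"
  have iI: "idl ?I" unfolding idl_def
  proof (intro conjI ballI allI impI)
    show "bot \<in> ?I" using pf_bot[OF px] f_bot by auto
  next
    fix c1 c2 assume "c1 \<in> ?I" "c2 \<in> ?I"
    then have "sup (f c1) (f c2) \<notin> x" using pf_sup[OF px] by auto
    then show "sup c1 c2 \<in> ?I" using pf_up[OF px _ f_sup] by blast
  next
    fix c c' assume "c \<in> ?I" "c' \<le> c"
    then show "c' \<in> ?I" using pf_up[OF px _ f_mono] by blast
  qed
  have "{c. a \<le> c} \<inter> ?I = {}" using pf_up[OF px fa f_mono] by blast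
  then obtain P where P: "pfilt P" "{c. a \<le> c} \<subseteq> P" "P \<inter> ?I = {}"
    using ext[OF filt_up iI] by blast
  have "a \<in> P" using P(2) by auto
  moreover have "\<forall>b\<in>P. f b \<in> x" using P(3) by auto
  ultimately show "x \<in> blackup XX RR (hh a)"
    unfolding blackup_def RR_def hh_def XX_def using px P(1) by blast
next
  fix x assume "x \<in> blackup XX RR (hh a)"
  then obtain y where px: "pfilt x" and "a \<in> y" "\<forall>b\<in>y. f b \<in> x"
    unfolding blackup_def RR_def hh_def XX_def by auto
  then show "x \<in> hh (f a)" unfolding hh_def XX_def by auto
qed

lemma h_g: "hh (g a) = blackdown XX RR (hh a)"
proof (rule set_eqI, rule iffI)
  fix x assume "x \<in> hh (g a)"
  then have px: "pfilt x" and ga: "g a \<in> x" unfolding hh_def XX_def by auto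
  have "a \<in> y" if py: "pfilt y" "\<forall>b\<in>x. f b \<in> y" for y
    using pf_up[OF py(1) _ fg] py(2) ga by blast
  then show "x \<in> blackdown XX RR (hh a)"
    unfolding blackdown_def RR_def hh_def XX_def using px by auto
next
  fix x assume "x \<in> blackdown XX RR (hh a)"
  then have px: "pfilt x" and hyp: "\<And>y. pfilt y \<Longrightarrow> (\<forall>b\<in>x. f b \<in> y) \<Longrightarrow> a \<in> y"
    unfolding blackdown_def RR_def hh_def XX_def by auto
  show "x \<in> hh (g a)"
  proof (rule ccontr)
    assume "x \<notin> hh (g a)"
    then have ni: "g a \<notin> x" using px unfolding hh_def XX_def by auto
    let ?F = "{c. \<exists>b\<in>x. f b \<le> c}"
    have fF: "filt ?F" unfolding filt_def
    proof (intro conjI ballI allI impI)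
      show "top \<in> ?F" using pf_top[OF px] by auto
    next
      fix c1 c2 assume "c1 \<in> ?F" "c2 \<in> ?F"
      then obtain b1 b2 where b: "b1 \<in> x" "f b1 \<le> c1" "b2 \<in> x" "f b2 \<le> c2" by blast
      have "inf b1 b2 \<in> x" using b pf_inf[OF px] by blast
      moreover have "f (inf b1 b2) \<le> inf c1 c2"
        using f_mono[of "inf b1 b2" b1] f_mono[of "inf b1 b2" b2] b(2,4)
        by (meson inf_le1 inf_le2 le_inf_iff order_trans)
      ultimately show "inf c1 c2 \<in> ?F" by blast
    next
      fix c c' assume "c \<in> ?F" "c \<le> c'"
      then show "c' \<in> ?F" using order_trans by blast
    qed
    have "?F \<inter> {c. c \<le> a} = {}"
    proof (rule ccontr)
      assume "?F \<inter> {c. c \<le> a} \<noteq> {}"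
      then obtain b c where "b \<in> x" "f b \<le> c" "c \<le> a" by blast
      then have "b \<le> g a" using gc order_trans by blast
      then show False using pf_up[OF px \<open>b \<in> x\<close>] ni by blast
    qed
    then obtain P where P: "pfilt P" "?F \<subseteq> P" "P \<inter> {c. c \<le> a} = {}"
      using ext[OF fF idl_down] by blast
    have "\<forall>b\<in>x. f b \<in> P" using P(2) by auto
    moreover have "a \<notin> P" using P(3) by auto
    ultimately show False using hyp P(1) by blast
  qed
qed

lemma embedding: "HBGC_embedding imp coimp f g XX LE RR hh"
  unfolding HBGC_embedding_def
proof (intro conjI allI)
  show "inj hh"
  proof (rule injI)
    fix a b assume eq: "hh a = hh b"
    show "a = b"
    proof (rule ccontr)
      assume "a \<noteq> b"
      then have "\<not> a \<le> b \<or> \<not> b \<le> a" using antisym by blast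
      then obtain P where "pfilt P" "(a \<in> P \<and> b \<notin> P) \<or> (b \<in> P \<and> a \<notin> P)" using sep by blast
      then show False using eq unfolding hh_def XX_def by blast
    qed
  qed
next
  fix a show "hh a \<in> upsets XX LE" unfolding upsets_def hh_def LE_def by auto
next
  fix a b show "hh (sup a b) = hh a \<union> hh b" unfolding hh_def XX_def using pf_sup by auto
next
  fix a b show "hh (inf a b) = hh a \<inter> hh b" unfolding hh_def XX_def using pf_inf by auto
next
  fix a b show "hh (imp a b) = frame_imp XX LE (hh a) (hh b)" by (rule h_imp)
next
  fix a b show "hh (coimp a b) = frame_coimp XX LE (hh a) (hh b)" by (rule h_coimp)
next
  fix a show "hh (f a) = blackup XX RR (hh a)" by (rule h_f)
next
  fix a show "hh (g a) = blackdown XX RR (hh a)" by (rule h_g)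
next
  show "hh bot = {}" unfolding hh_def XX_def using pf_bot by auto
next
  show "hh top = XX" unfolding hh_def XX_def using pf_top by auto
qed

end

theorem proposition4p3:
  fixes imp coimp :: "'a::bounded_lattice \<Rightarrow> 'a \<Rightarrow> 'a" and f g :: "'a \<Rightarrow> 'a"
  assumes "HBGC_algebra imp coimp f g"
  shows "\<exists>(X :: 'a set set) le R h. GC_frame X le R \<and> HBGC_embedding imp coimp f g X le R h"
proof -
  interpret hb imp coimp f g by (rule hb.intro[OF assms])
  show ?thesis using frame embedding by blast
qed

end
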